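(* For every integer $k\ge1$ there is a family $\mathcal E_k$ of infinite subsets of $\omega$ with $|\mathcal E_k|=2^\omega$ such that: (a) if $e_0,\dots,e_{k-1}\in\mathcal E_k$ then $\bigcap_{i<k}e_i$ is infinite; (b) if $e_0,\dots,e_k$ are distinct elements of $\mathcal E_k$ then $\bigcap_{i\le k}e_i$ is finite; (c) for every uncountable $X\subseteq\mathcal E_k$ there are uncountable $X_0,\dots,X_k\subseteq X$ such that $\bigcap_{i\le k}\bigcup X_i$ is finite. *)

theory Defs
  imports Main "HOL-Library.Equipollence" "HOL-Library.Countable_Set"
begin

end

theory Submission
  imports Defs "HOL-Library.Countable"
begin

definition pre :: "(nat \<Rightarrow> bool) \<Rightarrow> nat \<Rightarrow> bool list" where
  "pre f n = map f [0..<n]"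

definition EE :: "nat \<Rightarrow> (nat \<Rightarrow> bool) \<Rightarrow> nat set" where
  "EE k f = to_nat ` {L :: bool list list. length L \<le> k \<and>
      (\<exists>n. (\<forall>s\<in>set L. length s = n) \<and> pre f n \<in> set L)}"

lemma len_pre [simp]: "length (pre f n) = n"
  by (simp add: pre_def)

lemma take_pre: "m \<le> n \<Longrightarrow> take m (pre f n) = pre f m"
  by (simp add: pre_def take_map)

lemma pre_nth: "m < n \<Longrightarrow> pre f n ! m = f m"
  by (simp add: pre_def)

lemma pre_diff_mono: "pre f m \<noteq> pre g m \<Longrightarrow> m \<le> n \<Longrightarrow> pre f n \<noteq> pre g n"
  by (metis take_pre)

lemma ev_inj:
  assumes "finite S"
  shows "\<exists>N. \<forall>n\<ge>N. inj_on (\<lambda>f. pre f n) S"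
proof -
  have "\<forall>\<^sub>F n in sequentially. \<forall>p\<in>S \<times> S. fst p \<noteq> snd p \<longrightarrow> pre (fst p) n \<noteq> pre (snd p) n"
  proof (rule eventually_ball_finite)
    show "finite (S \<times> S)" using assms by simp
    show "\<forall>p\<in>S \<times> S. \<forall>\<^sub>F n in sequentially. fst p \<noteq> snd p \<longrightarrow> pre (fst p) n \<noteq> pre (snd p) n"
    proof
      fix p assume "p \<in> S \<times> S"
      show "\<forall>\<^sub>F n in sequentially. fst p \<noteq> snd p \<longrightarrow> pre (fst p) n \<noteq> pre (snd p) n"
      proof (cases "fst p = snd p")
        case True then show ?thesis by simp
      next
        case False
        then obtain m where m: "fst p m \<noteq> snd p m" by auto
        have "pre (fst p) (Suc m) \<noteq> pre (snd p) (Suc m)"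
          using m by (metis lessI pre_nth)
        then show ?thesis unfolding eventually_sequentially
          using pre_diff_mono by blast
      qed
    qed
  qed
  then obtain N where "\<forall>n\<ge>N. \<forall>p\<in>S \<times> S. fst p \<noteq> snd p \<longrightarrow> pre (fst p) n \<noteq> pre (snd p) n"
    unfolding eventually_sequentially by blast
  then show ?thesis unfolding inj_on_def by force
qed

lemma key:
  assumes "\<forall>i\<le>k. x \<in> EE k (g i)" "\<forall>n\<ge>N. inj_on (\<lambda>i. pre (g i) n) {..k}"
  shows "x \<in> to_nat ` {L :: bool list list. set L \<subseteq> {s. length s < N} \<and> length L \<le> k}"
proof -
  from assms(1) have "x \<in> EE k (g 0)" by simp
  then obtain L where "x = to_nat L" "L \<in> {L :: bool list list. length L \<le> k \<and>
      (\<exists>n. (\<forall>s\<in>set L. length s = n) \<and> pre (g 0) n \<in> set L)}"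
    unfolding EE_def by blast
  then obtain n where L: "x = to_nat L" "length L \<le> k" "\<forall>s\<in>set L. length s = n"
    by blast
  have all: "pre (g i) n \<in> set L" if "i \<le> k" for i
  proof -
    from assms(1) that have "x \<in> EE k (g i)" by simp
    then obtain L' n' where L': "x = to_nat L'" "\<forall>s\<in>set L'. length s = n'" "pre (g i) n' \<in> set L'"
      unfolding EE_def by blast
    then have "L' = L" using L(1) by simp
    then show ?thesis using L' L(3) by force
  qed
  have "n < N"
  proof (rule ccontr)
    assume "\<not> n < N"
    then have inj: "inj_on (\<lambda>i. pre (g i) n) {..k}" using assms(2) by simp
    have "(\<lambda>i. pre (g i) n) ` {..k} \<subseteq> set L" using all by auto
    then have "card {..k} \<le> card (set L)"
      using card_inj_on_le[OF inj] by simp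
    also have "\<dots> \<le> length L" by (rule card_length)
    finally show False using L(2) by simp
  qed
  then show ?thesis unfolding L(1) using L by (intro imageI CollectI conjI) auto
qed

lemma fin_set: "finite (to_nat ` {L :: bool list list. set L \<subseteq> {s. length s < N} \<and> length L \<le> k})"
proof -
  have "finite {s :: bool list. length s < N}"
  proof (rule finite_subset)
    show "{s :: bool list. length s < N} \<subseteq> {xs. set xs \<subseteq> UNIV \<and> length xs \<le> N}" by auto
    show "finite {xs :: bool list. set xs \<subseteq> UNIV \<and> length xs \<le> N}"
      by (rule finite_lists_length_le) simp
  qed
  then show ?thesis by (intro finite_imageI finite_lists_length_le)
qed

lemma EE_inj: assumes "k \<ge> 1" shows "inj (EE k)"
proof
  fix f g assume eq: "EE k f = EE k g"
  show "f = g"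
  proof (rule ccontr)
    assume "f \<noteq> g"
    then obtain m where m: "f m \<noteq> g m" by auto
    have d: "pre f (Suc m) \<noteq> pre g (Suc m)" using m by (metis lessI pre_nth)
    have "to_nat [pre f (Suc m)] \<in> EE k f" unfolding EE_def using assms by force
    then have "to_nat [pre f (Suc m)] \<in> EE k g" using eq by simp
    then obtain L n where "to_nat [pre f (Suc m)] = to_nat L" "\<forall>s\<in>set L. length s = n" "pre g n \<in> set L"
      unfolding EE_def by blast
    then show False using d by auto
  qed
qed

lemma inf_EE: "infinite (EE k f)" if "k \<ge> 1"
proof -
  have "range (\<lambda>n. to_nat [pre f n]) \<subseteq> EE k f" unfolding EE_def using that by force
  moreover have "inj (\<lambda>n. to_nat [pre f n])" by (rule injI) (metis len_pre list.inject to_nat_split)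
  ultimately show ?thesis using range_inj_infinite infinite_super by blast
qed

lemma uncountable_nodes:
  fixes Y :: "(nat \<Rightarrow> bool) set" and k :: nat
  assumes "uncountable Y"
  shows "\<exists>m. \<exists>s. inj_on s {..k} \<and> (\<forall>i\<le>k. length (s i) = m \<and> uncountable {f\<in>Y. pre f m = s i})"
proof (rule ccontr)
  assume H: "\<not> ?thesis"
  define U where "U = {s. uncountable {f\<in>Y. pre f (length s) = s}}"
  define B where "B = {f. \<forall>n. pre f n \<in> U}"
  have small: "card S \<le> k" if fS: "finite S" and SB: "S \<subseteq> B" for S
  proof -
    obtain N where N: "\<forall>n\<ge>N. inj_on (\<lambda>f. pre f n) S" using ev_inj[OF fS] by blast
    define T where "T = (\<lambda>f. pre f N) ` S"
    have cT: "card T = card S" unfolding T_def using N card_image by blast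
    have TU: "T \<subseteq> U" "\<forall>t\<in>T. length t = N" using SB unfolding T_def B_def by auto
    show ?thesis
    proof (rule ccontr)
      assume "\<not> card S \<le> k"
      then have "Suc k \<le> card T" using cT by simp
      then obtain T' where T': "T' \<subseteq> T" "card T' = Suc k"
        using obtain_subset_with_card_n by metis
      have fT': "finite T'" using T' by (metis card.infinite nat.distinct(1))
      obtain h where h: "bij_betw h {0..<card T'} T'" using ex_bij_betw_nat_finite[OF fT'] by blast
      have eq: "{0..<card T'} = {..k}" using T'(2) by auto
      have "inj_on h {..k}" using h eq by (simp add: bij_betw_def)
      moreover have "\<forall>i\<le>k. length (h i) = N \<and> uncountable {f\<in>Y. pre f N = h i}"
      proof (intro allI impI)
        fix i assume "i \<le> k"
        then have "h i \<in> T'" using h eq bij_betwE by blast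
        then have "h i \<in> T" using T' by auto
        then show "length (h i) = N \<and> uncountable {f\<in>Y. pre f N = h i}"
          using TU unfolding U_def by auto
      qed
      ultimately show False using H by blast
    qed
  qed
  have "finite B"
  proof (rule ccontr)
    assume "infinite B"
    then obtain S where "finite S" "card S = Suc k" "S \<subseteq> B"
      using infinite_arbitrarily_large by blast
    then show False using small by fastforce
  qed
  have "Y \<subseteq> B \<union> (\<Union>s\<in>-U. {f\<in>Y. pre f (length s) = s})"
  proof
    fix f assume "f \<in> Y"
    show "f \<in> B \<union> (\<Union>s\<in>-U. {f\<in>Y. pre f (length s) = s})"
    proof (cases "f \<in> B")
      case False
      then obtain n where "pre f n \<notin> U" unfolding B_def by auto
      then show ?thesis using \<open>f \<in> Y\<close> by (intro UnI2 UN_I[of "pre f n"]) auto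
    qed simp
  qed
  moreover have "countable (B \<union> (\<Union>s\<in>-U. {f\<in>Y. pre f (length s) = s}))"
  proof (rule countable_Un)
    show "countable B" using \<open>finite B\<close> by (rule countable_finite)
    show "countable (\<Union>s\<in>-U. {f\<in>Y. pre f (length s) = s})"
      by (rule countable_UN) (auto simp: U_def intro: countable_subset[OF subset_UNIV])
  qed
  ultimately show False using assms countable_subset by blast
qed

theorem lemma5p3:
  fixes k :: nat
  assumes "k \<ge> 1"
  shows "\<exists>\<E> :: nat set set.
     (\<forall>e\<in>\<E>. infinite e) \<and>
     \<E> \<approx> (UNIV :: nat set set) \<and>
     (\<forall>e :: nat \<Rightarrow> nat set. (\<forall>i<k. e i \<in> \<E>) \<longrightarrow> infinite (\<Inter>i<k. e i)) \<and>
     (\<forall>e :: nat \<Rightarrow> nat set. (\<forall>i\<le>k. e i \<in> \<E>) \<and> inj_on e {..k} \<longrightarrow> finite (\<Inter>i\<le>k. e i)) \<and>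
     (\<forall>X. X \<subseteq> \<E> \<and> uncountable X \<longrightarrow>
        (\<exists>Xs :: nat \<Rightarrow> nat set set. (\<forall>i\<le>k. Xs i \<subseteq> X \<and> uncountable (Xs i)) \<and>
            finite (\<Inter>i\<le>k. \<Union>(Xs i))))"
proof (intro exI[of _ "range (EE k)"] conjI allI impI)
  show "\<forall>e\<in>range (EE k). infinite e" using inf_EE assms by blast
  have "range (EE k) \<approx> (UNIV :: (nat \<Rightarrow> bool) set)"
    by (rule inj_on_image_eqpoll_self) (rule EE_inj[OF assms])
  also have "(UNIV :: (nat \<Rightarrow> bool) set) \<approx> (UNIV :: nat set set)"
    unfolding eqpoll_def
    by (rule exI[of _ Collect]) (auto simp: bij_betw_def inj_on_def intro!: range_eqI[of _ "\<lambda>x. x \<in> _"])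
  finally show "range (EE k) \<approx> (UNIV :: nat set set)" .
next
  fix e :: "nat \<Rightarrow> nat set" assume "\<forall>i<k. e i \<in> range (EE k)"
  then have "\<forall>i. \<exists>f. i < k \<longrightarrow> e i = EE k f" by blast
  then obtain g where g: "\<forall>i<k. e i = EE k (g i)" by metis
  define x where "x n = to_nat (map (\<lambda>i. pre (g i) n) [0..<k])" for n
  have "range x \<subseteq> (\<Inter>i<k. e i)"
  proof (clarsimp)
    fix n i assume "i < k"
    then show "x n \<in> e i" unfolding g[rule_format, OF \<open>i < k\<close>] EE_def x_def
      by (intro imageI CollectI conjI exI[of _ n]) auto
  qed
  moreover have "inj x"
  proof (rule injI)
    fix a b assume "x a = x b"
    then have "map (\<lambda>i. pre (g i) a) [0..<k] = map (\<lambda>i. pre (g i) b) [0..<k]"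
      unfolding x_def by simp
    then have "pre (g 0) a = pre (g 0) b" using assms
      by (metis (no_types, lifting) diff_zero length_upt less_eq_Suc_le nth_map nth_upt plus_nat.add_0 One_nat_def)
    then show "a = b" by (metis len_pre)
  qed
  ultimately show "infinite (\<Inter>i<k. e i)" using range_inj_infinite infinite_super by blast
next
  fix e :: "nat \<Rightarrow> nat set" assume A: "(\<forall>i\<le>k. e i \<in> range (EE k)) \<and> inj_on e {..k}"
  then have "\<forall>i. \<exists>f. i \<le> k \<longrightarrow> e i = EE k f" by blast
  then obtain g where g: "\<forall>i\<le>k. e i = EE k (g i)" by metis
  have ginj: "inj_on g {..k}"
  proof (rule inj_onI)
    fix i j assume ij: "i \<in> {..k}" "j \<in> {..k}" "g i = g j"
    then have "e i = e j" using g by simp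
    then show "i = j" using A ij by (meson inj_onD)
  qed
  obtain N where N: "\<forall>n\<ge>N. inj_on (\<lambda>f. pre f n) (g ` {..k})" using ev_inj[of "g ` {..k}"] by blast
  have N2: "\<forall>n\<ge>N. inj_on (\<lambda>i. pre (g i) n) {..k}"
  proof (intro allI impI)
    fix n assume "N \<le> n"
    then have "inj_on ((\<lambda>f. pre f n) \<circ> g) {..k}" using comp_inj_on[OF ginj] N by blast
    then show "inj_on (\<lambda>i. pre (g i) n) {..k}" by (simp add: o_def)
  qed
  have "(\<Inter>i\<le>k. e i) \<subseteq> to_nat ` {L :: bool list list. set L \<subseteq> {s. length s < N} \<and> length L \<le> k}"
  proof
    fix x assume "x \<in> (\<Inter>i\<le>k. e i)"
    then have "\<forall>i\<le>k. x \<in> EE k (g i)" using g by simp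
    then show "x \<in> to_nat ` {L :: bool list list. set L \<subseteq> {s. length s < N} \<and> length L \<le> k}"
      by (rule key[OF _ N2])
  qed
  then show "finite (\<Inter>i\<le>k. e i)" by (rule finite_subset[OF _ fin_set])
next
  fix X assume X: "X \<subseteq> range (EE k) \<and> uncountable X"
  define Y where "Y = {f. EE k f \<in> X}"
  have XY: "X = EE k ` Y" using X unfolding Y_def by auto
  have "uncountable Y" using X XY by auto
  then obtain m s where s: "inj_on s {..k}" "\<forall>i\<le>k. length (s i) = m \<and> uncountable {f\<in>Y. pre f m = s i}"
    using uncountable_nodes[OF \<open>uncountable Y\<close>, of k] by blast
  define Xs where "Xs i = EE k ` {f\<in>Y. pre f m = s i}" for i
  show "\<exists>Xs :: nat \<Rightarrow> nat set set. (\<forall>i\<le>k. Xs i \<subseteq> X \<and> uncountable (Xs i)) \<and>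
            finite (\<Inter>i\<le>k. \<Union>(Xs i))"
  proof (intro exI[of _ Xs] conjI allI impI)
    fix i assume "i \<le> k"
    show "Xs i \<subseteq> X" unfolding Xs_def XY by auto
    have "inj_on (EE k) {f\<in>Y. pre f m = s i}" using EE_inj[OF assms] inj_on_subset by blast
    then show "uncountable (Xs i)" unfolding Xs_def using s \<open>i \<le> k\<close>
      by (metis countable_image_inj_on)
  next
    have "(\<Inter>i\<le>k. \<Union>(Xs i)) \<subseteq> to_nat ` {L :: bool list list. set L \<subseteq> {s. length s < m} \<and> length L \<le> k}"
    proof
      fix x assume "x \<in> (\<Inter>i\<le>k. \<Union>(Xs i))"
      then have "\<forall>i\<le>k. \<exists>f. pre f m = s i \<and> x \<in> EE k f" unfolding Xs_def by blast
      then have "\<forall>i. \<exists>f. i \<le> k \<longrightarrow> pre f m = s i \<and> x \<in> EE k f" by blast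
      then obtain g where g: "\<forall>i\<le>k. pre (g i) m = s i \<and> x \<in> EE k (g i)" by metis
      have "\<forall>n\<ge>m. inj_on (\<lambda>i. pre (g i) n) {..k}"
      proof (intro allI impI inj_onI)
        fix n i j assume "m \<le> n" "i \<in> {..k}" "j \<in> {..k}" "pre (g i) n = pre (g j) n"
        have "s i = pre (g i) m" using g \<open>i \<in> {..k}\<close> by simp
        also have "\<dots> = take m (pre (g i) n)" using take_pre[OF \<open>m \<le> n\<close>] by simp
        also have "\<dots> = take m (pre (g j) n)" using \<open>pre (g i) n = pre (g j) n\<close> by simp
        also have "\<dots> = pre (g j) m" using take_pre[OF \<open>m \<le> n\<close>] by simp
        also have "\<dots> = s j" using g \<open>j \<in> {..k}\<close> by simp
        finally show "i = j" using s(1) \<open>i \<in> {..k}\<close> \<open>j \<in> {..k}\<close> by (simp add: inj_on_eq_iff)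
      qed
      then show "x \<in> to_nat ` {L :: bool list list. set L \<subseteq> {s. length s < m} \<and> length L \<le> k}"
      proof -
        assume inj: "\<forall>n\<ge>m. inj_on (\<lambda>i. pre (g i) n) {..k}"
        have "\<forall>i\<le>k. x \<in> EE k (g i)" using g by blast
        then show ?thesis by (rule key[OF _ inj])
      qed
    qed
    then show "finite (\<Inter>i\<le>k. \<Union>(Xs i))" by (rule finite_subset[OF _ fin_set])
  qed
qed

end
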